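(* Let $d\in\mathbb{N}_0$, $\boldsymbol{c}=(c_1,\ldots,c_d)\in(\mathbb{N}\setminus\{2\})^d$ with $c_1\ge3$ (if $d\ge1$), and $\boldsymbol{z}=(z_0,\ldots,z_d)\in\mathbb{C}^{d+1}$ with $|z_j|<1$. Then $\lim_{n\to\infty}G_n(\boldsymbol{c};\boldsymbol{z})=G(\boldsymbol{c};\boldsymbol{z})$, and the convergence is uniform on every closed region $|z_0|\le u_0<1,\ldots,|z_d|\le u_d<1$.
   Context: $t^{\star}_n(\boldsymbol{s})=\sum_{n\geq k_1\geq\cdots\geq k_r\geq1}\prod_{j}(2k_j-1)^{-s_j}$ and $t^{\star}(\boldsymbol{s})=\sum_{k_1\geq\cdots\geq k_r\geq1}\prod_{j}(2k_j-1)^{-s_j}$ (for $s_1>1$), both equal to $1$ on the empty index. $\{2\}^a$ is $2$ repeated $a$ times. $G_n(\boldsymbol{c};\boldsymbol{z})=\sum_{a_0,\ldots,a_d\geq0}t^{\star}_n(\{2\}^{a_0},c_1,\ldots,c_d,\{2\}^{a_d})z_0^{2a_0}\cdots z_d^{2a_d}$ and $G(\boldsymbol{c};\boldsymbol{z})$ is the same with $t^\star$ in place of $t^\star_n$. *)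

theory Defs
  imports "HOL-Analysis.Analysis"
begin

definition tstar_range :: "nat \<Rightarrow> nat list set" where
  "tstar_range r = {k. length k = r \<and> sorted_wrt (\<ge>) k \<and> (\<forall>x\<in>set k. 1 \<le> x)}"

definition tstar_term :: "nat list \<Rightarrow> nat list \<Rightarrow> real" where
  "tstar_term s k = (\<Prod>j<length s. 1 / (2 * real (k ! j) - 1) ^ (s ! j))"

definition tstar_n :: "nat \<Rightarrow> nat list \<Rightarrow> real" where
  "tstar_n n s = (\<Sum>k\<in>{k\<in>tstar_range (length s). \<forall>x\<in>set k. x \<le> n}. tstar_term s k)"

definition tstar :: "nat list \<Rightarrow> real" where
  "tstar s = infsum (tstar_term s) (tstar_range (length s))"

(* the index ({2}^{a_0}, c_1, {2}^{a_1}, ..., c_d, {2}^{a_d}), a = [a_0,...,a_d] *)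
definition Gidx :: "nat list \<Rightarrow> nat list \<Rightarrow> nat list" where
  "Gidx c a = replicate (a ! 0) 2 @
     concat (map (\<lambda>j. (c ! j) # replicate (a ! (Suc j)) 2) [0..<length c])"

definition Gmono :: "complex list \<Rightarrow> nat list \<Rightarrow> complex" where
  "Gmono z a = (\<Prod>j<length z. (z ! j) ^ (2 * (a ! j)))"

definition G_n :: "nat \<Rightarrow> nat list \<Rightarrow> complex list \<Rightarrow> complex" where
  "G_n n c z = infsum (\<lambda>a. of_real (tstar_n n (Gidx c a)) * Gmono z a)
                  {a. length a = Suc (length c)}"

definition G :: "nat list \<Rightarrow> complex list \<Rightarrow> complex" where
  "G c z = infsum (\<lambda>a. of_real (tstar (Gidx c a)) * Gmono z a)
                  {a. length a = Suc (length c)}"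

end

theory Submission
  imports Defs
begin

fun T :: "nat \<Rightarrow> nat list \<Rightarrow> real" where
  "T n [] = 1"
| "T n (x#s) = (\<Sum>K=1..n. (1/(2*real K - 1))^x * T K s)"

lemma T_nonneg: "0 \<le> T n s"
  by (induction s arbitrary: n) (auto intro!: sum_nonneg mult_nonneg_nonneg)

lemma T_mono: "n \<le> m \<Longrightarrow> T n s \<le> T m s"
proof (cases s)
  case (Cons x s')
  assume "n \<le> m"
  then show ?thesis using Cons
    by (auto intro!: sum_mono2 mult_nonneg_nonneg T_nonneg)
qed simp

lemma T_Suc: "T (Suc n) (x#s) = T n (x#s) + (1/(2*real (Suc n) - 1))^x * T (Suc n) s"
  by (simp add: sum.cl_ivl_Suc)

lemma T_zero: "T 0 (x#s) = 0" by simp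

lemma f_ineq:
  assumes "1 \<le> n"
  shows "(2 - 1/real n) + (1/(2*real (Suc n) - 1))^2 * (2 - 1/real (Suc n)) \<le> 2 - 1/real (Suc n)"
proof -
  have n: "real n \<ge> 1" using assms by simp
  have a1: "2*real (Suc n) - 1 = 2*real n+1" by simp
  have a2: "2 - 1/real (Suc n) = (2*real n+1)/(real n+1)" by (simp add: field_simps)
  have e: "(1/(2*real (Suc n) - 1))^2 * (2 - 1/real (Suc n)) = 1/((real n+1)*(2*real n+1))"
    unfolding a1 a2 proof -
    have p1: "2*real n+1 \<noteq> 0" "real n + 1 \<noteq> 0" using n by auto
    show "(1 / (2 * real n + 1))\<^sup>2 * ((2 * real n + 1) / (real n + 1)) = 1 / ((real n + 1) * (2 * real n + 1))"
      using p1 by (simp add: power2_eq_square divide_simps)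
  qed
  have d: "1/real n - 1/real (Suc n) = 1/(real n*(real n+1))"
    using n by (simp add: divide_simps)
  have "1/((real n+1)*(2*real n+1)) \<le> 1/(real n*(real n+1))"
    using n by (intro divide_left_mono mult_pos_pos) (auto simp: algebra_simps)
  then have "1/((real n+1)*(2*real n+1)) \<le> 1/real n - 1/real (Suc n)" using d by simp
  then show ?thesis using e by simp
qed

lemma T_rep2_aux: "T n (replicate a 2 @ r) \<le> (2 - 1/real n) * T n r"
proof (induction n arbitrary: a)
  case 0
  then show ?case by (cases a) (auto intro: T_nonneg)
next
  case (Suc n)
  note outer = Suc.IH
  show ?case
  proof (induction a)
    case 0
    have "1 \<le> 2 - 1/real (Suc n)" by (simp add: field_simps)
    then show ?case using T_nonneg[of "Suc n" r]
      by (simp add: mult_le_cancel_right1)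
  next
    case (Suc a)
    let ?x = "(1/(2*real (Suc n) - 1))^2"
    have eq: "T (Suc n) (replicate (Suc a) 2 @ r) = T n (replicate (Suc a) 2 @ r) + ?x * T (Suc n) (replicate a 2 @ r)"
      using T_Suc[of n 2 "replicate a 2 @ r"] by simp
    have x0: "0 \<le> ?x" by simp
    show ?case
    proof (cases "n = 0")
      case True
      then show ?thesis using eq Suc.IH by simp
    next
      case False
      have h1: "T n (replicate (Suc a) 2 @ r) \<le> (2 - 1/real n) * T (Suc n) r"
      proof -
        have "0 \<le> 2 - 1/real n" using False by (simp add: field_simps)
        then have "(2 - 1/real n) * T n r \<le> (2 - 1/real n) * T (Suc n) r"
          using T_mono[of n "Suc n" r] by (intro mult_left_mono) auto
        then show ?thesis using outer[of "Suc a"] by linarith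
      qed
      have h2: "?x * T (Suc n) (replicate a 2 @ r) \<le> ?x * ((2 - 1/real (Suc n)) * T (Suc n) r)"
        using Suc.IH x0 by (rule mult_left_mono)
      have "T (Suc n) (replicate (Suc a) 2 @ r) \<le> ((2 - 1/real n) + ?x * (2 - 1/real (Suc n))) * T (Suc n) r"
        using eq h1 h2 by (simp add: algebra_simps)
      also have "\<dots> \<le> (2 - 1/real (Suc n)) * T (Suc n) r"
        using f_ineq[of n] False T_nonneg by (intro mult_right_mono) auto
      finally show ?thesis .
    qed
  qed
qed

lemma T_rep2: "T n (replicate a 2 @ r) \<le> 2 * T n r"
proof -
  have "(2 - 1/real n) * T n r \<le> 2 * T n r"
    using T_nonneg[of n r] by (intro mult_right_mono) auto
  then show ?thesis using T_rep2_aux[of n a r] by linarith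
qed

lemma T_cons_mono:
  assumes "\<And>K. T K s \<le> M * T K s'" "0 \<le> M"
  shows "T n (x#s) \<le> M * T n (x#s')"
proof -
  have "T n (x#s) \<le> (\<Sum>K=1..n. (1/(2*real K - 1))^x * (M * T K s'))"
    using assms by (auto intro!: sum_mono mult_left_mono)
  also have "\<dots> = M * T n (x#s')"
    by (simp add: sum_distrib_left algebra_simps)
  finally show ?thesis .
qed

fun R :: "nat list \<Rightarrow> nat list \<Rightarrow> nat list" where
  "R (c#cs) (a#as) = c # replicate a 2 @ R cs as"
| "R _ _ = []"

lemma T_R: "length as = length cs \<Longrightarrow> T n (R cs as) \<le> 2^length cs * T n cs"
proof (induction cs arbitrary: as n)
  case Nil
  then show ?case by simp
next
  case (Cons c cs)
  then obtain a as' where as: "as = a # as'" "length as' = length cs" by (cases as) auto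
  have "\<And>K. T K (replicate a 2 @ R cs as') \<le> (2 * 2^length cs) * T K cs"
  proof -
    fix K
    have "T K (replicate a 2 @ R cs as') \<le> 2 * T K (R cs as')" by (rule T_rep2)
    also have "\<dots> \<le> 2 * (2^length cs * T K cs)" using Cons.IH[OF as(2)] by simp
    finally show "T K (replicate a 2 @ R cs as') \<le> (2 * 2^length cs) * T K cs" by simp
  qed
  then have "T n (c # (replicate a 2 @ R cs as')) \<le> (2 * 2^length cs) * T n (c#cs)"
    by (intro T_cons_mono) auto
  then show ?case using as by simp
qed

lemma concat_R: "length b = length c \<Longrightarrow>
  concat (map (\<lambda>j. (c ! j) # replicate (b ! j) 2) [0..<length c]) = R c b"
proof (induction c arbitrary: b)
  case Nil
  then show ?case by simp
next
  case (Cons x cs)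
  then obtain y bs where b: "b = y # bs" "length bs = length cs" by (cases b) auto
  have "[0..<length (x#cs)] = 0 # map Suc [0..<length cs]"
    by (simp add: upt_conv_Cons map_Suc_upt del: upt_Suc)
  then show ?case using Cons.IH[OF b(2)] b by (simp add: comp_def)
qed

lemma Gidx_R: "length a = Suc (length c) \<Longrightarrow> Gidx c a = replicate (a!0) 2 @ R c (tl a)"
  unfolding Gidx_def
proof -
  assume "length a = Suc (length c)"
  then have l: "length (tl a) = length c" by simp
  have "(\<lambda>j. (c ! j) # replicate (a ! Suc j) 2) = (\<lambda>j. (c ! j) # replicate (tl a ! j) 2)"
    using \<open>length a = Suc (length c)\<close> by (cases a) auto
  then show "replicate (a ! 0) 2 @ concat (map (\<lambda>j. c ! j # replicate (a ! Suc j) 2) [0..<length c]) =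
    replicate (a ! 0) 2 @ R c (tl a)" using concat_R[OF l] by simp
qed

lemma T_Gidx: "length a = Suc (length c) \<Longrightarrow> T n (Gidx c a) \<le> 2 * 2^length c * T n c"
proof -
  assume a: "length a = Suc (length c)"
  have "T n (Gidx c a) \<le> 2 * T n (R c (tl a))" unfolding Gidx_R[OF a] by (rule T_rep2)
  also have "\<dots> \<le> 2 * (2^length c * T n c)" using T_R[of "tl a" c n] a by simp
  finally show ?thesis by simp
qed

lemma y_le: "1 \<le> K \<Longrightarrow> 0 \<le> 1/(2*real K - 1) \<and> 1/(2*real K - 1) \<le> 1"
  by auto

lemma T_le_K: "(\<forall>x\<in>set s. 1 \<le> x) \<Longrightarrow> 1 \<le> K \<Longrightarrow> T K s \<le> real K"
proof (induction s arbitrary: K)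
  case Nil
  then show ?case by simp
next
  case (Cons x s)
  have "T K (x#s) \<le> (\<Sum>k=1..K. 1)"
  proof (simp only: T.simps, rule sum_mono)
    fix k assume k: "k \<in> {1..K}"
    let ?y = "1/(2*real k - 1)"
    have y: "0 \<le> ?y" "?y \<le> 1" using k by auto
    have "?y^x \<le> ?y" using y Cons.prems(1) by (simp add: power_le_one_iff power_decreasing[of 1 x ?y, simplified])
    moreover have "T k s \<le> real k" using Cons k by auto
    ultimately have "?y^x * T k s \<le> ?y * real k"
      using y T_nonneg by (intro mult_mono) auto
    also have "\<dots> \<le> 1" using k by (simp add: divide_simps)
    finally show "?y^x * T k s \<le> 1" .
  qed
  then show ?case by simp
qed

lemma sum_inv_sq: "(\<Sum>K=1..n. 1/(real K)^2) \<le> 2 - 1/real n"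
proof (induction n)
  case 0 then show ?case by simp
next
  case (Suc n)
  show ?case
  proof (cases "n = 0")
    case True then show ?thesis by simp
  next
    case False
    then have n: "real n \<ge> 1" by simp
    have "1/(real (Suc n))^2 \<le> 1/real n - 1/real (Suc n)"
    proof -
      have d: "1/real n - 1/real (Suc n) = 1/(real n*(real n+1))"
        using n by (simp add: divide_simps)
      have "1/(real (Suc n))^2 \<le> 1/(real n*(real n+1))"
        using n by (intro divide_left_mono mult_pos_pos) (auto simp: power2_eq_square algebra_simps intro: add_pos_nonneg)
      then show ?thesis using d by simp
    qed
    then show ?thesis using Suc.IH by (simp add: sum.cl_ivl_Suc)
  qed
qed

lemma T_c_bound:
  assumes "\<forall>x\<in>set c. 1 \<le> x" "c \<noteq> [] \<longrightarrow> 3 \<le> c ! 0"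
  shows "T n c \<le> 2"
proof (cases c)
  case Nil then show ?thesis by simp
next
  case (Cons x cs)
  then have x: "3 \<le> x" and cs: "\<forall>x\<in>set cs. 1 \<le> x" using assms by auto
  have "T n c \<le> (\<Sum>K=1..n. 1/(real K)^2)"
  proof (simp only: Cons T.simps, rule sum_mono)
    fix k assume k: "k \<in> {1..n}"
    let ?y = "1/(2*real k - 1)"
    have y: "0 \<le> ?y" "?y \<le> 1" using k by auto
    have "?y^x \<le> ?y^3" using y x by (rule power_decreasing[rotated])
    moreover have "T k cs \<le> real k" using T_le_K cs k by auto
    ultimately have "?y^x * T k cs \<le> ?y^3 * real k"
      using y T_nonneg by (intro mult_mono) auto
    also have "\<dots> \<le> 1/(real k)^2"
    proof -
      have k1: "real k \<ge> 1" using k by auto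
      have "(real k)^3 \<le> (2*real k - 1)^3" using k1 by (intro power_mono) auto
      then show ?thesis using k1 by (simp add: divide_simps power2_eq_square power3_eq_cube)
    qed
    finally show "?y^x * T k cs \<le> 1/(real k)^2" .
  qed
  also have "\<dots> \<le> 2 - 1/real n" by (rule sum_inv_sq)
  also have "\<dots> \<le> 2" by simp
  finally show ?thesis .
qed

definition S :: "nat \<Rightarrow> nat \<Rightarrow> nat list set" where
  "S n r = {k\<in>tstar_range r. \<forall>x\<in>set k. x \<le> n}"

lemma S_finite: "finite (S n r)"
proof -
  have "S n r \<subseteq> {k. set k \<subseteq> {0..n} \<and> length k = r}"
    unfolding S_def tstar_range_def by auto
  moreover have "finite {k. set k \<subseteq> {0..n} \<and> length k = r}"
    by (rule finite_lists_length_eq) simp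
  ultimately show ?thesis by (rule finite_subset)
qed

lemma S_Suc: "S n (Suc r) = (\<lambda>(K,k). K#k) ` (SIGMA K:{1..n}. S K r)"
proof (intro set_eqI iffI)
  fix l assume "l \<in> S n (Suc r)"
  then obtain K k where l: "l = K#k" by (cases l) (auto simp: S_def tstar_range_def)
  show "l \<in> (\<lambda>(K,k). K#k) ` (SIGMA K:{1..n}. S K r)"
    using \<open>l \<in> S n (Suc r)\<close> unfolding l S_def tstar_range_def
    by (auto intro!: image_eqI[of _ _ "(K,k)"])
next
  fix l assume "l \<in> (\<lambda>(K,k). K#k) ` (SIGMA K:{1..n}. S K r)"
  then show "l \<in> S n (Suc r)" unfolding S_def tstar_range_def
    by auto (meson order_trans)
qed

lemma term_cons: "tstar_term (x#s) (K#k) = (1/(2*real K - 1))^x * tstar_term s k"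
  unfolding tstar_term_def length_Cons prod.lessThan_Suc_shift by (simp add: power_one_over)

lemma tstar_n_T: "tstar_n n s = T n s"
proof (induction s arbitrary: n)
  case Nil
  have "{k\<in>tstar_range 0. \<forall>x\<in>set k. x \<le> n} = {[]}" by (auto simp: tstar_range_def)
  then show ?case by (simp add: tstar_n_def tstar_term_def)
next
  case (Cons x s)
  have "tstar_n n (x#s) = sum (tstar_term (x#s)) (S n (Suc (length s)))"
    by (simp add: tstar_n_def S_def)
  also have "\<dots> = sum (tstar_term (x#s) \<circ> (\<lambda>(K,k). K#k)) (SIGMA K:{1..n}. S K (length s))"
    unfolding S_Suc by (rule sum.reindex) (auto simp: inj_on_def)
  also have "\<dots> = (\<Sum>(K,k)\<in>(SIGMA K:{1..n}. S K (length s)). tstar_term (x#s) (K#k))"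
    by (rule sum.cong) auto
  also have "\<dots> = (\<Sum>K=1..n. \<Sum>k\<in>S K (length s). tstar_term (x#s) (K#k))"
    by (rule sum.Sigma[symmetric]) (auto simp: S_finite)
  also have "\<dots> = (\<Sum>K=1..n. \<Sum>k\<in>S K (length s). (1/(2*real K - 1))^x * tstar_term s k)"
    by (simp add: term_cons)
  also have "\<dots> = (\<Sum>K=1..n. (1/(2*real K - 1))^x * tstar_n K s)"
    by (simp add: sum_distrib_left tstar_n_def S_def)
  also have "\<dots> = T n (x#s)" using Cons.IH by simp
  finally show ?case .
qed



lemma tstar_term_nonneg: "k \<in> tstar_range (length s) \<Longrightarrow> 0 \<le> tstar_term s k"
  unfolding tstar_term_def tstar_range_def
proof (rule prod_nonneg)
  fix j assume k: "k \<in> {k. length k = length s \<and> sorted_wrt (\<ge>) k \<and> (\<forall>x\<in>set k. 1 \<le> x)}"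
    and j: "j \<in> {..<length s}"
  then have "1 \<le> k ! j" by auto
  then show "0 \<le> 1 / (2 * real (k ! j) - 1) ^ (s ! j)" by simp
qed

lemma tstar_lim:
  assumes B: "\<And>n. tstar_n n s \<le> B"
  shows "(\<lambda>n. tstar_n n s) \<longlonglongrightarrow> tstar s" and "tstar_n n s \<le> tstar s"
proof -
  let ?A = "tstar_range (length s)"
  let ?f = "tstar_term s"
  have Sn: "tstar_n n s = sum ?f (S n (length s))" for n by (simp add: tstar_n_def S_def)
  have SA: "S n (length s) \<subseteq> ?A" for n by (auto simp: S_def)
  have sub: "F \<subseteq> S (Max (insert 0 (\<Union>k\<in>F. set k))) (length s)" if "finite F" "F \<subseteq> ?A" for F
  proof
    fix k assume "k \<in> F"
    moreover have "x \<le> Max (insert 0 (\<Union>k\<in>F. set k))" if "k \<in> F" "x \<in> set k" for x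
      using that \<open>finite F\<close> by (intro Max_ge) auto
    ultimately show "k \<in> S (Max (insert 0 (\<Union>k\<in>F. set k))) (length s)"
      using \<open>F \<subseteq> ?A\<close> by (auto simp: S_def)
  qed
  have summ: "?f summable_on ?A"
  proof (rule nonneg_bdd_above_summable_on)
    show "0 \<le> ?f x" if "x \<in> ?A" for x using that by (rule tstar_term_nonneg)
    show "bdd_above (sum ?f ` {F. F \<subseteq> ?A \<and> finite F})"
    proof (rule bdd_aboveI2)
      fix F assume F: "F \<in> {F. F \<subseteq> ?A \<and> finite F}"
      let ?N = "Max (insert 0 (\<Union>k\<in>F. set k))"
      have "sum ?f F \<le> sum ?f (S ?N (length s))"
        using F sub[of F] SA[of ?N] by (intro sum_mono2 S_finite) (auto intro: tstar_term_nonneg)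
      also have "\<dots> \<le> B" using B[of ?N] Sn[of ?N] by simp
      finally show "sum ?f F \<le> B" .
    qed
  qed
  then have "(?f has_sum tstar s) ?A"
    unfolding tstar_def by (rule has_sum_infsum)
  then have hs: "(sum ?f \<longlongrightarrow> tstar s) (finite_subsets_at_top ?A)"
    unfolding has_sum_def .
  show lim: "(\<lambda>n. tstar_n n s) \<longlonglongrightarrow> tstar s"
  proof (rule tendstoI)
    fix e :: real assume "0 < e"
    have "eventually (\<lambda>Y. dist (sum ?f Y) (tstar s) < e) (finite_subsets_at_top ?A)"
      using tendstoD[OF hs \<open>0 < e\<close>] .
    then obtain X where X: "finite X" "X \<subseteq> ?A" and
      X3: "\<forall>Y. finite Y \<and> X \<subseteq> Y \<and> Y \<subseteq> ?A \<longrightarrow> dist (sum ?f Y) (tstar s) < e"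
      unfolding eventually_finite_subsets_at_top by blast
    let ?N = "Max (insert 0 (\<Union>k\<in>X. set k))"
    have "dist (tstar_n n s) (tstar s) < e" if "?N \<le> n" for n
    proof -
      have "S ?N (length s) \<subseteq> S n (length s)" using that unfolding S_def by auto
      then have "X \<subseteq> S n (length s)" using sub[OF X(1,2)] by blast
      then have "dist (sum ?f (S n (length s))) (tstar s) < e" using X3 S_finite SA by blast
      then show ?thesis using Sn by simp
    qed
    then show "eventually (\<lambda>n. dist (tstar_n n s) (tstar s) < e) sequentially"
      unfolding eventually_sequentially by blast
  qed
  have "incseq (\<lambda>n. tstar_n n s)"
    by (rule incseq_SucI) (simp add: tstar_n_T T_mono)
  then show "tstar_n n s \<le> tstar s" using lim by (rule incseq_le)
qed

definition m :: "real list \<Rightarrow> nat list \<Rightarrow> real" where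
  "m u a = (\<Prod>j<length u. (u!j)^(2*(a!j)))"

lemma m_cons: "m (v#us) (b#bs) = v^(2*b) * m us bs"
  unfolding m_def length_Cons prod.lessThan_Suc_shift by simp

lemma m_nonneg: "\<forall>j<length u. 0 \<le> u!j \<Longrightarrow> 0 \<le> m u a"
  unfolding m_def by (auto intro!: prod_nonneg)

lemma m_bound:
  "\<forall>j<length u. 0 \<le> u!j \<and> u!j < 1 \<Longrightarrow> finite F \<Longrightarrow> F \<subseteq> {a. length a = length u} \<Longrightarrow>
    sum (m u) F \<le> (\<Prod>j<length u. 1/(1-(u!j)^2))"
proof (induction u arbitrary: F)
  case Nil
  then have "F \<subseteq> {[]}" by auto
  then have "F = {} \<or> F = {[]}" by auto
  then show ?case by (auto simp: m_def)
next
  case (Cons v us)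
  have v: "0 \<le> v" "v < 1" using Cons.prems(1) by auto
  have us: "\<forall>j<length us. 0 \<le> us!j \<and> us!j < 1" using Cons.prems(1) by auto
  let ?B = "hd ` F" and ?G = "tl ` F"
  have fB: "finite ?B" "finite ?G" using Cons.prems(2) by auto
  have Gs: "?G \<subseteq> {a. length a = length us}" using Cons.prems(3) by auto
  have Fs: "F \<subseteq> (\<lambda>(b,bs). b#bs) ` (?B \<times> ?G)"
  proof
    fix a assume a: "a \<in> F"
    then have "a \<noteq> []" using Cons.prems(3) by auto
    then have "a = (\<lambda>(b,bs). b#bs) (hd a, tl a)" by simp
    then show "a \<in> (\<lambda>(b,bs). b#bs) ` (?B \<times> ?G)" using a by blast
  qed
  have mnn: "0 \<le> m (v#us) a" for a using Cons.prems(1) by (intro m_nonneg) auto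
  have "sum (m (v#us)) F \<le> sum (m (v#us)) ((\<lambda>(b,bs). b#bs) ` (?B \<times> ?G))"
    using Fs fB by (intro sum_mono2 mnn) auto
  also have "\<dots> = sum (m (v#us) \<circ> (\<lambda>(b,bs). b#bs)) (?B \<times> ?G)"
    by (rule sum.reindex) (auto simp: inj_on_def)
  also have "\<dots> = (\<Sum>(b,bs)\<in>?B \<times> ?G. v^(2*b) * m us bs)"
    by (rule sum.cong) (auto simp: m_cons)
  also have "\<dots> = (\<Sum>b\<in>?B. v^(2*b)) * sum (m us) ?G"
    by (simp add: sum_product sum.cartesian_product)
  also have "\<dots> \<le> (1/(1-v^2)) * (\<Prod>j<length us. 1/(1-(us!j)^2))"
  proof (rule mult_mono)
    have sg: "summable (\<lambda>b. (v^2)^b)" using v by (intro summable_geometric) (simp add: abs_square_less_1)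
    have "(\<Sum>b\<in>?B. v^(2*b)) = (\<Sum>b\<in>?B. (v^2)^b)" by (simp add: power_mult)
    also have "\<dots> \<le> (\<Sum>b. (v^2)^b)" using sg fB by (intro sum_le_suminf) auto
    also have "\<dots> = 1/(1-v^2)" using v by (intro suminf_geometric) (simp add: abs_square_less_1)
    finally show "(\<Sum>b\<in>?B. v^(2*b)) \<le> 1/(1-v^2)" .
    show "sum (m us) ?G \<le> (\<Prod>j<length us. 1/(1-(us!j)^2))" using Cons.IH[OF us fB(2) Gs] .
    show "0 \<le> sum (m us) ?G" using us by (intro sum_nonneg m_nonneg) auto
    have "v^2 < 1" using v by (simp add: abs_square_less_1)
    then show "0 \<le> 1/(1-v^2)" by simp
  qed
  also have "\<dots> = (\<Prod>j<length (v#us). 1/(1-((v#us)!j)^2))"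
    unfolding length_Cons prod.lessThan_Suc_shift by simp
  finally show ?case .
qed

lemma m_summable:
  assumes "\<forall>j<length u. 0 \<le> u!j \<and> u!j < 1"
  shows "m u summable_on {a. length a = length u}"
proof (rule nonneg_bdd_above_summable_on)
  show "0 \<le> m u x" for x using assms by (intro m_nonneg) auto
  show "bdd_above (sum (m u) ` {F. F \<subseteq> {a. length a = length u} \<and> finite F})"
    using m_bound[OF assms] by (intro bdd_aboveI2) auto
qed

lemma dom_conv:
  fixes h :: "nat \<Rightarrow> 'a \<Rightarrow> real"
  assumes g: "g summable_on A"
    and hb: "\<And>n a. a \<in> A \<Longrightarrow> 0 \<le> h n a \<and> h n a \<le> g a"
    and hl: "\<And>a. a \<in> A \<Longrightarrow> (\<lambda>n. h n a) \<longlonglongrightarrow> 0"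
  shows "(\<lambda>n. infsum (h n) A) \<longlonglongrightarrow> 0"
proof (rule tendstoI)
  fix e :: real assume e: "0 < e"
  obtain F where F: "finite F" "F \<subseteq> A" "dist (sum g F) (infsum g A) \<le> e/4"
    using infsum_finite_approximation[OF g, of "e/4"] e by auto
  have gF: "g summable_on F" using F by simp
  have tail: "infsum g (A - F) \<le> e/4"
  proof -
    have "infsum g (A - F) = infsum g A - infsum g F" by (rule infsum_Diff[OF g gF F(2)])
    also have "\<dots> = infsum g A - sum g F" using F by simp
    finally show ?thesis using F(3) unfolding dist_real_def by linarith
  qed
  have hs: "h n summable_on A" for n
    by (rule summable_on_comparison_test[OF g]) (use hb in blast)+
  have "(\<lambda>n. sum (h n) F) \<longlonglongrightarrow> 0"
    using F by (intro tendsto_null_sum hl) auto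
  then have ev: "eventually (\<lambda>n. dist (sum (h n) F) 0 < e/4) sequentially"
    using e by (intro tendstoD) auto
  show "eventually (\<lambda>n. dist (infsum (h n) A) 0 < e) sequentially"
    using ev
  proof eventually_elim
    case (elim n)
    have hF: "h n summable_on F" using F by simp
    have "infsum (h n) A = infsum (h n) (A - F) + infsum (h n) F"
      using infsum_Diff[OF hs hF F(2)] by simp
    also have "infsum (h n) F = sum (h n) F" using F by simp
    also have "infsum (h n) (A - F) \<le> infsum g (A - F)"
    proof (rule infsum_mono)
      show "h n summable_on A - F" using hs by (rule summable_on_subset) auto
      show "g summable_on A - F" using g by (rule summable_on_subset) auto
      show "h n x \<le> g x" if "x \<in> A - F" for x using hb that by blast
    qed
    finally have "infsum (h n) A \<le> e/4 + sum (h n) F" using tail by simp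
    moreover have "sum (h n) F < e/4" using elim by (simp add: dist_real_def)
    moreover have "0 \<le> infsum (h n) A" using hb by (intro infsum_nonneg) auto
    ultimately show ?case using e by (simp add: dist_real_def)
  qed
qed

lemma norm_Gmono:
  assumes "length w = length u" "\<forall>j<length w. norm (w!j) \<le> u!j"
  shows "norm (Gmono w a) \<le> m u a"
proof -
  have "norm (Gmono w a) = (\<Prod>j<length w. norm ((w!j)^(2*(a!j))))"
    unfolding Gmono_def by (simp add: prod_norm)
  also have "\<dots> \<le> (\<Prod>j<length w. (u!j)^(2*(a!j)))"
    using assms(2) by (intro prod_mono) (auto simp: norm_power intro: power_mono)
  finally show ?thesis unfolding m_def using assms(1) by simp
qed

theorem lemma3p5:
  fixes c :: "nat list" and z :: "complex list"
  assumes c_pos: "\<forall>x\<in>set c. 1 \<le> x \<and> x \<noteq> 2"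
    and c_first: "c \<noteq> [] \<longrightarrow> 3 \<le> c ! 0"
    and z_len: "length z = Suc (length c)"
    and z_bd: "\<forall>j<length z. norm (z ! j) < 1"
  shows "(\<lambda>n. G_n n c z) \<longlonglongrightarrow> G c z \<and>
         (\<forall>u :: real list. length u = Suc (length c) \<and> (\<forall>j<length u. u ! j < 1) \<longrightarrow>
           uniform_limit {w. length w = Suc (length c) \<and> (\<forall>j<length w. norm (w ! j) \<le> u ! j)}
             (\<lambda>n w. G_n n c w) (\<lambda>w. G c w) sequentially)"
proof -
  have cpos: "\<forall>x\<in>set c. 1 \<le> x" using c_pos by auto
  define M :: real where "M = 4 * 2^length c"
  let ?A = "{a :: nat list. length a = Suc (length c)}"
  have tn_bd: "tstar_n n (Gidx c a) \<le> M" if "a \<in> ?A" for n a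
  proof -
    have "tstar_n n (Gidx c a) \<le> 2 * 2^length c * T n c"
      using that by (simp add: tstar_n_T T_Gidx)
    also have "\<dots> \<le> 2 * 2^length c * 2"
      using T_c_bound[OF cpos c_first] by (intro mult_left_mono) auto
    finally show ?thesis by (simp add: M_def)
  qed
  have tn_nn: "0 \<le> tstar_n n s" for n s by (simp add: tstar_n_T T_nonneg)
  have t_lim: "(\<lambda>n. tstar_n n (Gidx c a)) \<longlonglongrightarrow> tstar (Gidx c a)" if "a \<in> ?A" for a
    using tn_bd[OF that] by (rule tstar_lim(1))
  have t_ge: "tstar_n n (Gidx c a) \<le> tstar (Gidx c a)" if "a \<in> ?A" for n a
    using tn_bd[OF that] by (rule tstar_lim(2))
  have t_le: "tstar (Gidx c a) \<le> M" if "a \<in> ?A" for a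
    using t_lim[OF that] by (rule LIMSEQ_le_const2) (use tn_bd[OF that] in auto)
  have UL: "uniform_limit {w. length w = Suc (length c) \<and> (\<forall>j<length w. norm (w ! j) \<le> u ! j)}
             (\<lambda>n w. G_n n c w) (\<lambda>w. G c w) sequentially"
    if u: "length u = Suc (length c)" "\<forall>j<length u. u ! j < 1" for u :: "real list"
  proof -
    define W :: "complex list set" where "W = {w. length w = Suc (length c) \<and> (\<forall>j<length w. norm (w ! j) \<le> u ! j)}"
    have "uniform_limit W (\<lambda>n w. G_n n c w) (\<lambda>w. G c w) sequentially"
    proof (cases "W = {}")
      case True
      then show ?thesis by (intro uniform_limitI) auto
    next
      case False
      then obtain w0 where w0: "w0 \<in> W" by auto
      have u01: "\<forall>j<length u. 0 \<le> u!j \<and> u!j < 1"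
      proof (intro allI impI conjI)
        fix j assume j: "j < length u"
        have "norm (w0!j) \<le> u!j" using w0 j u(1) unfolding W_def by auto
        then show "0 \<le> u!j" using norm_ge_zero order_trans by blast
        show "u!j < 1" using j u(2) by auto
      qed
      have ms: "m u summable_on ?A" using m_summable[OF u01] u(1) by simp
      have mnn: "0 \<le> m u a" for a using u01 by (intro m_nonneg) auto
      define h where "h n a = (tstar (Gidx c a) - tstar_n n (Gidx c a)) * m u a" for n a
      have gs: "(\<lambda>a. M * m u a) summable_on ?A" using ms by (rule summable_on_cmult_right)
      have hb: "0 \<le> h n a \<and> h n a \<le> M * m u a" if "a \<in> ?A" for n a
      proof
        show "0 \<le> h n a" unfolding h_def using t_ge[OF that] mnn by simp
        have "tstar (Gidx c a) - tstar_n n (Gidx c a) \<le> M" using t_le[OF that] tn_nn[of n] by smt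
        then show "h n a \<le> M * m u a" unfolding h_def using mnn by (intro mult_right_mono) auto
      qed
      have hs: "h n summable_on ?A" for n
        by (rule summable_on_comparison_test[OF gs]) (use hb in blast)+
      have R: "(\<lambda>n. infsum (h n) ?A) \<longlonglongrightarrow> 0"
      proof (rule dom_conv[OF gs])
        show "0 \<le> h n a \<and> h n a \<le> M * m u a" if "a \<in> ?A" for n a using hb[OF that] .
        show "(\<lambda>n. h n a) \<longlonglongrightarrow> 0" if "a \<in> ?A" for a
        proof -
          have "(\<lambda>n. (tstar (Gidx c a) - tstar_n n (Gidx c a)) * m u a) \<longlonglongrightarrow> (tstar (Gidx c a) - tstar (Gidx c a)) * m u a"
            by (intro tendsto_intros t_lim[OF that])
          then show ?thesis unfolding h_def by simp
        qed
      qed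
      have bound: "dist (G_n n c w) (G c w) \<le> infsum (h n) ?A" if w: "w \<in> W" for n w
      proof -
        have wl: "length w = length u" "\<forall>j<length w. norm (w!j) \<le> u!j" using w u(1) unfolding W_def by auto
        have nm: "norm (Gmono w a) \<le> m u a" for a by (rule norm_Gmono[OF wl])
        define Fn where "Fn a = complex_of_real (tstar_n n (Gidx c a)) * Gmono w a" for a
        define D where "D a = complex_of_real (tstar (Gidx c a) - tstar_n n (Gidx c a)) * Gmono w a" for a
        have nFn: "norm (Fn a) \<le> M * m u a" if "a \<in> ?A" for a
        proof -
          have "norm (Fn a) = tstar_n n (Gidx c a) * norm (Gmono w a)"
            unfolding Fn_def using tn_nn by (simp add: norm_mult)
          also have "\<dots> \<le> M * m u a" using tn_bd[OF that] tn_nn nm mnn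
            by (intro mult_mono) (auto simp: M_def)
          finally show ?thesis .
        qed
        have nD: "norm (D a) \<le> h n a" if "a \<in> ?A" for a
        proof -
          have "norm (D a) = (tstar (Gidx c a) - tstar_n n (Gidx c a)) * norm (Gmono w a)"
            unfolding D_def norm_mult norm_of_real using t_ge[OF that, of n] by simp
          also have "\<dots> \<le> h n a" unfolding h_def using t_ge[OF that] nm
            by (intro mult_left_mono) auto
          finally show ?thesis .
        qed
        have nFs: "(\<lambda>a. norm (Fn a)) summable_on ?A"
          by (rule summable_on_comparison_test[OF gs]) (use nFn in auto)
        have nDs: "(\<lambda>a. norm (D a)) summable_on ?A"
          by (rule summable_on_comparison_test[OF hs]) (use nD in auto)
        have Fs: "Fn summable_on ?A" by (rule abs_summable_summable[OF nFs])
        have Ds: "D summable_on ?A" by (rule abs_summable_summable[OF nDs])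
        have Geq: "G c w = infsum (\<lambda>a. Fn a + D a) ?A"
          unfolding G_def Fn_def D_def by (simp add: algebra_simps of_real_diff)
        have Gneq: "G_n n c w = infsum Fn ?A"
          unfolding G_n_def Fn_def by simp
        have "G c w - G_n n c w = infsum D ?A"
          unfolding Geq Gneq infsum_add[OF Fs Ds] by simp
        then have "dist (G_n n c w) (G c w) = norm (infsum D ?A)"
          by (simp add: dist_norm norm_minus_commute)
        also have "\<dots> \<le> infsum (\<lambda>a. norm (D a)) ?A" by (rule norm_infsum_bound[OF nDs])
        also have "\<dots> \<le> infsum (h n) ?A" by (rule infsum_mono[OF nDs hs]) (use nD in auto)
        finally show ?thesis .
      qed
      show ?thesis
      proof (rule uniform_limitI)
        fix e :: real assume e: "0 < e"
        have "eventually (\<lambda>n. dist (infsum (h n) ?A) 0 < e) sequentially"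
          using tendstoD[OF R e] .
        then show "eventually (\<lambda>n. \<forall>w\<in>W. dist (G_n n c w) (G c w) < e) sequentially"
        proof eventually_elim
          case (elim n)
          then have "infsum (h n) ?A < e" by (simp add: dist_real_def)
          then show ?case using bound by (meson le_less_trans)
        qed
      qed
    qed
    then show ?thesis unfolding W_def .
  qed
  have "z \<in> {w. length w = Suc (length c) \<and> (\<forall>j<length w. norm (w ! j) \<le> map norm z ! j)}"
    using z_len by auto
  moreover have "uniform_limit {w. length w = Suc (length c) \<and> (\<forall>j<length w. norm (w ! j) \<le> map norm z ! j)}
             (\<lambda>n w. G_n n c w) (\<lambda>w. G c w) sequentially"
    using z_len z_bd by (intro UL) auto
  ultimately have "(\<lambda>n. G_n n c z) \<longlonglongrightarrow> G c z"
    by (intro tendsto_uniform_limitI[where S="{w. length w = Suc (length c) \<and> (\<forall>j<length w. norm (w ! j) \<le> map norm z ! j)}"]) 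
  with UL show ?thesis by blast
qed

end
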